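(* Let $\boldsymbol{G}\in\{0,1\}^{r\times m}$ with $r\le m$, let $p=\min\{\lfloor m/2\rfloor, r\}$, and let $q$ be a prime power with $q\ge\binom{m}{p}$. Let $\boldsymbol{H}\in\mathbb{F}_q^{r\times m}$ be the output of any execution of the MCD algorithm on $(\boldsymbol{G},q)$. Then for every $k\in[r]$ and every $L\subseteq[m]$, the submatrix $\boldsymbol{H}_{[k]}^{L}$ reaches its maximum possible rank, i.e. $$\mathrm{rank}\,\boldsymbol{H}_{[k]}^{L}=\max\{\mathrm{rank}\,\boldsymbol{H}'^{L}_{[k]}:\ \boldsymbol{H}'\in\mathbb{F}_q^{r\times m}\text{ fits }\boldsymbol{G}\}.$$
   Context: $\boldsymbol{H}$ fits $\boldsymbol{G}$ if $h_{k,i}=0$ whenever $g_{k,i}=0$. $\boldsymbol{H}_{[k]}$ is the submatrix of the first $k$ rows and $\boldsymbol{H}_{[k]}^{L}$ its submatrix with columns in $L$. For a matrix with columns indexed by $[m]$, a set $S\subseteq[m]$ is independent if the columns indexed by $S$ are linearly independent, dependent otherwise, and a circuit if it is dependent but every proper subset is independent. Veto sets: let $2\le k\le r$, $i\in L\subseteq[m]$, and suppose all entries of $\boldsymbol{H}_{[k]}^{L}$ other than $h_{k,i}$ are fixed. For a circuit $C$ of $\boldsymbol{H}_{[k-1]}$ with $i\in C\subseteq L$, the column of $\boldsymbol{H}_{[k-1]}$ indexed by $i$ is a unique linear combination $\sum_{j\in C\setminus\{i\}} f_j\,(\text{column } j \text{ of } \boldsymbol{H}_{[k-1]})$; its veto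 value is $c(C)=\sum_{j\in C\setminus\{i\}} f_j h_{k,j}$ (so $c(\{i\})=0$). The veto set is $Z_{k,i}^{L}=\{c(L'\cup\{i\}): L'\subseteq L\setminus\{i\},\ L'\cup\{i\}\text{ a circuit of }\boldsymbol{H}_{[k-1]}\}$. MCD algorithm on $(\boldsymbol{G},q)$, with $G_k=\{i: g_{k,i}=1\}$: set $h_{k,i}=0$ whenever $g_{k,i}=0$; set $h_{1,i}=1$ for $i\in G_1$; for $k=2,\dots,r$: let $R=G_k$; while $R\ne\emptyset$: pick any $i\in R$, set $R\leftarrow R\setminus\{i\}$ and $L=[m]\setminus R$, compute $Z_{k,i}^{L}$ from the current entries (all entries of $\boldsymbol{H}_{[k]}^{L}$ except $h_{k,i}$ are fixed at this point), and set $h_{k,i}$ to an arbitrary element of $\mathbb{F}_q\setminus Z_{k,i}^{L}$. *)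

theory Defs
  imports Main
begin

(* Matrices are functions nat => nat => 'a; rows and columns are 0-indexed.
   An r x m matrix uses rows {0..<r} and columns {0..<m}.
   Row k of the paper (1-indexed) is row k-1 here; H_[k] = rows {0..<k}. *)

definition col_indep :: "(nat \<Rightarrow> nat \<Rightarrow> 'a::field) \<Rightarrow> nat \<Rightarrow> nat set \<Rightarrow> bool" where
  "col_indep H k S \<longleftrightarrow> finite S \<and>
     (\<forall>c. (\<forall>row<k. (\<Sum>j\<in>S. c j * H row j) = 0) \<longrightarrow> (\<forall>j\<in>S. c j = 0))"

definition circuit :: "(nat \<Rightarrow> nat \<Rightarrow> 'a::field) \<Rightarrow> nat \<Rightarrow> nat set \<Rightarrow> bool" where
  "circuit H k C \<longleftrightarrow> finite C \<and> \<not> col_indep H k C \<and> (\<forall>D. D \<subset> C \<longrightarrow> col_indep H k D)"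

definition mrank :: "(nat \<Rightarrow> nat \<Rightarrow> 'a::field) \<Rightarrow> nat \<Rightarrow> nat set \<Rightarrow> nat" where
  "mrank H k L = Max {card S | S. S \<subseteq> L \<and> col_indep H k S}"

definition fits :: "nat \<Rightarrow> nat \<Rightarrow> (nat \<Rightarrow> nat \<Rightarrow> bool) \<Rightarrow> (nat \<Rightarrow> nat \<Rightarrow> 'a::field) \<Rightarrow> bool" where
  "fits r m G H \<longleftrightarrow> (\<forall>k<r. \<forall>i<m. \<not> G k i \<longrightarrow> H k i = 0)"

(* veto set Z_{k,i}^L, where k is the (0-indexed) current row, so the preceding
   rows are {0..<k}; the circuit C = L' \<union> {i} with i \<in> C \<subseteq> L, and the veto value
   is \<Sum>_{j \<in> C-{i}} f_j h_{k,j} where column i = \<Sum>_{j\<in>C-{i}} f_j column j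
   (on rows {0..<k}); f is unique for a circuit. *)
definition veto_set :: "(nat \<Rightarrow> nat \<Rightarrow> 'a::field) \<Rightarrow> nat \<Rightarrow> nat \<Rightarrow> nat set \<Rightarrow> 'a set" where
  "veto_set H k i L = {v. \<exists>C f. i \<in> C \<and> C \<subseteq> L \<and> circuit H k C \<and>
      (\<forall>row<k. H row i = (\<Sum>j\<in>C-{i}. f j * H row j)) \<and>
      v = (\<Sum>j\<in>C-{i}. f j * H k j)}"

(* H is the output of some execution of the MCD algorithm on (G, q), q = CARD('a).
   Entries are never changed once set, and the veto set only depends on entries
   already fixed at that time, so it can be evaluated on the final matrix.
   For row k, the list xs is the order in which the elements of G_k are picked;
   when xs!t is picked, R = set (drop (Suc t) xs) and L = [m] - R. *)
definition mcd_output :: "(nat \<Rightarrow> nat \<Rightarrow> bool) \<Rightarrow> nat \<Rightarrow> nat \<Rightarrow> (nat \<Rightarrow> nat \<Rightarrow> 'a::field) \<Rightarrow> bool" where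
  "mcd_output G r m H \<longleftrightarrow> fits r m G H \<and>
     (\<forall>i<m. G 0 i \<longrightarrow> H 0 i = 1) \<and>
     (\<forall>k. 1 \<le> k \<and> k < r \<longrightarrow>
        (\<exists>xs. distinct xs \<and> set xs = {i. i < m \<and> G k i} \<and>
           (\<forall>t<length xs. H k (xs ! t) \<notin>
               veto_set H k (xs ! t) ({0..<m} - set (drop (Suc t) xs)))))"

end

theory Submission
  imports Defs
begin

lemma indep_subset:
  assumes "col_indep H k S" "T \<subseteq> S" shows "col_indep H k T"
  unfolding col_indep_def
proof (intro conjI allI impI ballI)
  have fS: "finite S" using assms(1) unfolding col_indep_def by simp
  then show fT: "finite T" using finite_subset[OF assms(2)] by simp
  fix c j assume h: "\<forall>row<k. (\<Sum>j\<in>T. c j * H row j) = 0" and j: "j \<in> T"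
  define c' where "c' = (\<lambda>l. if l \<in> T then c l else 0)"
  have "\<forall>row<k. (\<Sum>l\<in>S. c' l * H row l) = 0"
  proof (intro allI impI)
    fix row assume "row < k"
    have "(\<Sum>l\<in>S. c' l * H row l) = (\<Sum>l\<in>S. if l \<in> T then c l * H row l else 0)"
      by (rule sum.cong) (auto simp: c'_def)
    also have "\<dots> = (\<Sum>l\<in>S \<inter> T. c l * H row l)" by (rule sum.inter_restrict[OF fS, symmetric])
    also have "S \<inter> T = T" using assms(2) by blast
    finally show "(\<Sum>l\<in>S. c' l * H row l) = 0" using h \<open>row < k\<close> by simp
  qed
  then have "\<forall>l\<in>S. c' l = 0" using assms(1) unfolding col_indep_def by blast
  then have "c' j = 0" using j assms(2) by blast
  then show "c j = 0" using j by (simp add: c'_def)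
qed

lemma indep_rows:
  assumes "col_indep H k S" "k \<le> k'" shows "col_indep H k' S"
  unfolding col_indep_def
proof (intro conjI allI impI)
  show "finite S" using assms(1) unfolding col_indep_def by simp
  fix c assume h: "\<forall>row<k'. (\<Sum>j\<in>S. c j * H row j) = 0"
  then have "\<forall>row<k. (\<Sum>j\<in>S. c j * H row j) = 0" using assms(2) by simp
  then show "\<forall>j\<in>S. c j = 0" using assms(1) unfolding col_indep_def by blast
qed

lemma indep_empty: "col_indep H k {}"
  unfolding col_indep_def by auto

lemma Ms_finite: "finite L \<Longrightarrow> finite {card S | S. S \<subseteq> L \<and> col_indep H k S}"
proof -
  assume "finite L"
  have "{card S | S. S \<subseteq> L \<and> col_indep H k S} \<subseteq> card ` Pow L" by blast
  moreover have "finite (card ` Pow L)" using \<open>finite L\<close> by simp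
  ultimately show ?thesis by (rule finite_subset)
qed

lemma mrank_ge:
  assumes "finite L" "S \<subseteq> L" "col_indep H k S" shows "card S \<le> mrank H k L"
  unfolding mrank_def
proof (rule Max_ge)
  show "finite {card S | S. S \<subseteq> L \<and> col_indep H k S}" using Ms_finite[OF assms(1)] .
  show "card S \<in> {card S | S. S \<subseteq> L \<and> col_indep H k S}" using assms(2,3) by blast
qed

lemma mrank_ex:
  assumes "finite L" obtains S where "S \<subseteq> L" "col_indep H k S" "card S = mrank H k L"
proof -
  have "mrank H k L \<in> {card S | S. S \<subseteq> L \<and> col_indep H k S}"
    unfolding mrank_def
  proof (rule Max_in)
    show "finite {card S | S. S \<subseteq> L \<and> col_indep H k S}" using Ms_finite[OF assms] .
    have "\<exists>S. card ({}::nat set) = card S \<and> S \<subseteq> L \<and> col_indep H k S" using indep_empty[of H k] by blast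
    then have "card ({}::nat set) \<in> {card S | S. S \<subseteq> L \<and> col_indep H k S}" by (simp only: mem_Collect_eq)
    then show "{card S | S. S \<subseteq> L \<and> col_indep H k S} \<noteq> {}" using equals0D by blast
  qed
  then obtain S where "mrank H k L = card S" "S \<subseteq> L" "col_indep H k S" by (auto simp only: mem_Collect_eq)
  then show ?thesis using that by simp
qed

lemma mrank_le_card: assumes "finite L" shows "mrank H k L \<le> card L"
proof -
  obtain S where "S \<subseteq> L" "col_indep H k S" "card S = mrank H k L" by (rule mrank_ex[OF assms])
  then show ?thesis using card_mono[OF assms \<open>S \<subseteq> L\<close>] by simp
qed

lemma mrank_mono_L: assumes "finite L'" "L \<subseteq> L'" shows "mrank H k L \<le> mrank H k L'"
proof -
  have "finite L" using finite_subset[OF assms(2,1)] .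
  obtain S where "S \<subseteq> L" "col_indep H k S" "card S = mrank H k L" by (rule mrank_ex[OF \<open>finite L\<close>])
  then have "S \<subseteq> L'" using assms(2) by blast
  from mrank_ge[OF assms(1) this \<open>col_indep H k S\<close>] \<open>card S = mrank H k L\<close> show ?thesis by simp
qed

lemma mrank_mono_k: assumes "finite L" "k \<le> k'" shows "mrank H k L \<le> mrank H k' L"
proof -
  obtain S where "S \<subseteq> L" "col_indep H k S" "card S = mrank H k L" by (rule mrank_ex[OF assms(1)])
  moreover have "col_indep H k' S" using indep_rows[OF \<open>col_indep H k S\<close> assms(2)] .
  ultimately show ?thesis using mrank_ge[OF assms(1), of S H k'] by simp
qed

lemma dep_circuit:
  "finite T \<Longrightarrow> \<not> col_indep H k T \<Longrightarrow> \<exists>C\<subseteq>T. circuit H k C"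
proof (induction "card T" arbitrary: T rule: less_induct)
  case less
  show ?case
  proof (cases "\<forall>D. D \<subset> T \<longrightarrow> col_indep H k D")
    case True then show ?thesis using less.prems unfolding circuit_def by blast
  next
    case False
    then obtain D where D: "D \<subset> T" "\<not> col_indep H k D" by blast
    have "card D < card T" using D less.prems psubset_card_mono by blast
    have "finite D" using finite_subset[OF psubset_imp_subset[OF D(1)] less.prems(1)] .
    then have "\<exists>C\<subseteq>D. circuit H k C" using less.hyps[OF \<open>card D < card T\<close>] D by blast
    then obtain C where "C \<subseteq> D" "circuit H k C" by blast
    then show ?thesis using D by blast
  qed
qed

lemma circuit_coeffs:
  assumes "circuit H k C"
  shows "\<exists>c. (\<forall>row<k. (\<Sum>l\<in>C. c l * H row l) = 0) \<and> (\<forall>l\<in>C. c l \<noteq> 0)"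
proof -
  have fC: "finite C" and nd: "\<not> col_indep H k C" and mn: "\<forall>D. D \<subset> C \<longrightarrow> col_indep H k D"
    using assms unfolding circuit_def by auto
  from nd fC obtain c j0 where c: "\<forall>row<k. (\<Sum>l\<in>C. c l * H row l) = 0" and j0: "j0 \<in> C" "c j0 \<noteq> 0"
    unfolding col_indep_def by blast
  have "\<forall>l\<in>C. c l \<noteq> 0"
  proof (intro ballI notI)
    fix l assume l: "l \<in> C" "c l = 0"
    have ind: "col_indep H k (C - {l})" using mn l by blast
    have "\<forall>row<k. (\<Sum>l'\<in>C - {l}. c l' * H row l') = 0"
    proof (intro allI impI)
      fix row assume "row < k"
      have "(\<Sum>l'\<in>C. c l' * H row l') = c l * H row l + (\<Sum>l'\<in>C - {l}. c l' * H row l')"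
        using sum.remove[OF fC l(1)] by blast
      then show "(\<Sum>l'\<in>C - {l}. c l' * H row l') = 0" using c \<open>row < k\<close> l by simp
    qed
    then have "\<forall>l'\<in>C - {l}. c l' = 0" using ind unfolding col_indep_def by blast
    then show False using j0 l by (cases "j0 = l") auto
  qed
  then show ?thesis using c by blast
qed


lemma sum_restrict_sub:
  assumes "finite A" "C \<subseteq> A"
  shows "(\<Sum>l\<in>A. (if l \<in> C then c l else 0) * (h l :: 'a::field)) = (\<Sum>l\<in>C. c l * h l)"
proof -
  have "(\<Sum>l\<in>A. (if l \<in> C then c l else 0) * h l) = (\<Sum>l\<in>A. if l \<in> C then c l * h l else 0)"
    by (rule sum.cong) auto
  also have "\<dots> = (\<Sum>l\<in>A \<inter> C. c l * h l)" by (rule sum.inter_restrict[OF assms(1), symmetric])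
  also have "A \<inter> C = C" using assms(2) by blast
  finally show ?thesis .
qed

lemma Hp_step:
  fixes H' :: "nat \<Rightarrow> nat \<Rightarrow> 'a::field"
  assumes fits: "fits r m G H'" and k: "k < r" and Sm: "S \<subseteq> {0..<m}"
    and ind: "col_indep H' (Suc k) S" and nind: "\<not> col_indep H' k S"
  shows "\<exists>j\<in>S. G k j \<and> col_indep H' k (S - {j})"
proof -
  have fS: "finite S" using ind unfolding col_indep_def by simp
  from nind fS obtain c j0 where c: "\<forall>row<k. (\<Sum>l\<in>S. c l * H' row l) = 0" and j0: "j0 \<in> S" "c j0 \<noteq> 0"
    unfolding col_indep_def by auto
  define \<alpha> where "\<alpha> = (\<Sum>l\<in>S. c l * H' k l)"
  have a0: "\<alpha> \<noteq> 0"
  proof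
    assume "\<alpha> = 0"
    then have "\<forall>row<Suc k. (\<Sum>l\<in>S. c l * H' row l) = 0" using c \<alpha>_def less_Suc_eq by auto
    then have "\<forall>l\<in>S. c l = 0" using ind unfolding col_indep_def by blast
    then show False using j0 by blast
  qed
  have "\<exists>j\<in>S. c j * H' k j \<noteq> 0"
  proof (rule ccontr)
    assume "\<not> (\<exists>j\<in>S. c j * H' k j \<noteq> 0)"
    then have "\<alpha> = 0" unfolding \<alpha>_def by (intro sum.neutral) blast
    then show False using a0 by simp
  qed
  then obtain j where j: "j \<in> S" "c j * H' k j \<noteq> 0" by blast
  then have cj: "c j \<noteq> 0" and hj: "H' k j \<noteq> 0" by auto
  have "j < m" using j(1) Sm by auto
  then have Gj: "G k j" using fits k hj unfolding fits_def by blast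
  have "col_indep H' k (S - {j})"
    unfolding col_indep_def
  proof (intro conjI allI impI)
    show "finite (S - {j})" using fS by simp
    fix e assume he: "\<forall>row<k. (\<Sum>l\<in>S - {j}. e l * H' row l) = 0"
    define \<beta> where "\<beta> = (\<Sum>l\<in>S - {j}. e l * H' k l)"
    define d where "d = (\<lambda>l. \<alpha> * (if l \<in> S - {j} then e l else 0) - \<beta> * c l)"
    have key: "(\<Sum>l\<in>S. d l * H' row l) = \<alpha> * (\<Sum>l\<in>S - {j}. e l * H' row l) - \<beta> * (\<Sum>l\<in>S. c l * H' row l)" for row
    proof -
      have "(\<Sum>l\<in>S. d l * H' row l) = (\<Sum>l\<in>S. \<alpha> * ((if l \<in> S - {j} then e l else 0) * H' row l) - \<beta> * (c l * H' row l))"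
        unfolding d_def by (rule sum.cong) (auto simp: algebra_simps)
      also have "\<dots> = \<alpha> * (\<Sum>l\<in>S. (if l \<in> S - {j} then e l else 0) * H' row l) - \<beta> * (\<Sum>l\<in>S. c l * H' row l)"
        by (simp add: sum_subtractf sum_distrib_left)
      also have "(\<Sum>l\<in>S. (if l \<in> S - {j} then e l else 0) * H' row l) = (\<Sum>l\<in>S - {j}. e l * H' row l)"
        by (rule sum_restrict_sub[OF fS]) blast
      finally show ?thesis .
    qed
    have "\<forall>row<Suc k. (\<Sum>l\<in>S. d l * H' row l) = 0"
    proof (intro allI impI)
      fix row assume "row < Suc k"
      then consider "row < k" | "row = k" by linarith
      then show "(\<Sum>l\<in>S. d l * H' row l) = 0"
      proof cases
        case 1 then show ?thesis using key[of row] he c by simp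
      next
        case 2 then show ?thesis using key[of row] by (simp add: \<alpha>_def[symmetric] \<beta>_def[symmetric])
      qed
    qed
    then have dz: "\<forall>l\<in>S. d l = 0" using ind unfolding col_indep_def by blast
    then have "d j = 0" using j by blast
    then have "\<beta> * c j = 0" unfolding d_def by simp
    then have b0: "\<beta> = 0" using cj by simp
    show "\<forall>l\<in>S - {j}. e l = 0"
    proof
      fix l assume l: "l \<in> S - {j}"
      then have "d l = 0" using dz by blast
      then have "\<alpha> * e l = 0" using l b0 unfolding d_def by simp
      then show "e l = 0" using a0 by simp
    qed
  qed
  then show ?thesis using j(1) Gj by blast
qed

lemma mrank0: assumes "finite L" shows "mrank H 0 L = 0"
proof -
  obtain S where S: "S \<subseteq> L" "col_indep H 0 S" "card S = mrank H 0 L" by (rule mrank_ex[OF assms])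
  have "S = {}"
  proof (rule ccontr)
    assume "S \<noteq> {}"
    then obtain x where "x \<in> S" by blast
    have ci: "\<forall>c. (\<forall>row<(0::nat). (\<Sum>j\<in>S. c j * H row j) = 0) \<longrightarrow> (\<forall>j\<in>S. c j = 0)"
      using S(2) unfolding col_indep_def by simp
    have "\<forall>j\<in>S. (1::'a) = 0" using spec[OF ci, of "\<lambda>_. 1"] by simp
    then show False using \<open>x \<in> S\<close> by simp
  qed
  then show ?thesis using S(3) by simp
qed

lemma H_step0:
  fixes H :: "nat \<Rightarrow> nat \<Rightarrow> 'a::field"
  assumes mcd: "mcd_output G r m H" and "j < m" "G 0 j" "j \<in> L" "finite L"
  shows "1 \<le> mrank H 1 L"
proof -
  have h1: "H 0 j = 1" using mcd assms unfolding mcd_output_def by blast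
  have "col_indep H 1 {j}"
    unfolding col_indep_def
  proof (intro conjI allI impI)
    show "finite {j}" by simp
    fix c assume "\<forall>row<(1::nat). (\<Sum>l\<in>{j}. c l * H row l) = 0"
    then have "c j * H 0 j = 0" by simp
    then show "\<forall>l\<in>{j}. c l = 0" using h1 by simp
  qed
  then have "card {j} \<le> mrank H 1 L" using mrank_ge[OF assms(5)] assms(4) by blast
  then show ?thesis by simp
qed


lemma H_step:
  fixes H :: "nat \<Rightarrow> nat \<Rightarrow> 'a::field"
  assumes mcd: "mcd_output G r m H" and k: "1 \<le> k" "k < r" and Lm: "L \<subseteq> {0..<m}"
    and jL: "j \<in> L" and Gj: "G k j" and ge: "mrank H k L \<le> mrank H k (L - {j})"
  shows "mrank H k L + 1 \<le> mrank H (Suc k) L"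
proof -
  have fL: "finite L" using finite_subset[OF Lm] by simp
  have fLj: "finite (L - {j})" using fL by simp
  obtain B where B: "B \<subseteq> L - {j}" "col_indep H k B" "card B = mrank H k (L - {j})"
    by (rule mrank_ex[OF fLj])
  have "mrank H k (L - {j}) \<le> mrank H k L" by (rule mrank_mono_L[OF fL]) blast
  then have cB: "card B = mrank H k L" using B(3) ge by simp
  have jB: "j \<notin> B" using B(1) by blast
  have fB: "finite B" using finite_subset[OF B(1) fLj] .
  have jBL: "insert j B \<subseteq> L" using B(1) jL by blast
  have cjB: "card (insert j B) = card B + 1" using fB jB by simp
  have nd: "\<not> col_indep H k (insert j B)"
  proof
    assume "col_indep H k (insert j B)"
    then have "card (insert j B) \<le> mrank H k L" using mrank_ge[OF fL jBL] by blast
    then show False using cjB cB by simp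
  qed
  obtain C where C: "C \<subseteq> insert j B" "circuit H k C"
    using dep_circuit[of "insert j B" H k] fB nd by blast
  have fC: "finite C" using C(2) unfolding circuit_def by simp
  have jC: "j \<in> C"
  proof (rule ccontr)
    assume "j \<notin> C"
    then have "C \<subseteq> B" using C(1) by blast
    then have "col_indep H k C" by (rule indep_subset[OF B(2)])
    then show False using C(2) unfolding circuit_def by simp
  qed
  obtain c where c: "\<forall>row<k. (\<Sum>l\<in>C. c l * H row l) = 0" and cnz: "\<forall>l\<in>C. c l \<noteq> 0"
    using circuit_coeffs[OF C(2)] by blast
  have CL: "C \<subseteq> L" using C(1) jBL by blast
  obtain xs where xs: "distinct xs" "set xs = {i. i < m \<and> G k i}"
    "\<forall>t<length xs. H k (xs ! t) \<notin> veto_set H k (xs ! t) ({0..<m} - set (drop (Suc t) xs))"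
    using mcd k unfolding mcd_output_def by blast
  define T where "T = {t. t < length xs \<and> xs ! t \<in> C}"
  have fT: "finite T" unfolding T_def by simp
  have "j < m" using jL Lm by auto
  then have "j \<in> set xs" using xs(2) Gj by simp
  then obtain t0 where "t0 < length xs" "xs ! t0 = j" by (auto simp: in_set_conv_nth)
  then have "t0 \<in> T" unfolding T_def using jC by simp
  then have Tne: "T \<noteq> {}" by blast
  define t where "t = Max T"
  have tT: "t \<in> T" unfolding t_def using fT Tne by (rule Max_in)
  define i where "i = xs ! t"
  have tl: "t < length xs" and iC: "i \<in> C" using tT unfolding T_def i_def by auto
  have Csub: "C \<subseteq> {0..<m} - set (drop (Suc t) xs)"
  proof
    fix l assume lC: "l \<in> C"
    have "l < m" using lC CL Lm by auto
    moreover have "l \<notin> set (drop (Suc t) xs)"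
    proof
      assume "l \<in> set (drop (Suc t) xs)"
      then obtain v where v: "v < length (drop (Suc t) xs)" "drop (Suc t) xs ! v = l"
        by (auto simp: in_set_conv_nth)
      then have "xs ! (Suc t + v) = l" "Suc t + v < length xs" by auto
      then have "Suc t + v \<in> T" unfolding T_def using lC by simp
      then have "Suc t + v \<le> t" unfolding t_def by (rule Max_ge[OF fT])
      then show False by simp
    qed
    ultimately show "l \<in> {0..<m} - set (drop (Suc t) xs)" by simp
  qed
  have veto: "H k i \<notin> veto_set H k i ({0..<m} - set (drop (Suc t) xs))"
    using xs(3) tl unfolding i_def by blast
  have ci: "c i \<noteq> 0" using cnz iC by blast
  define f where "f = (\<lambda>l. - c l / c i)"
  have fi: "c i * f l = - c l" for l unfolding f_def using ci by simp
  have mulsum: "c i * (\<Sum>l\<in>C - {i}. f l * H row l) = - (\<Sum>l\<in>C - {i}. c l * H row l)" for row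
  proof -
    have "c i * (\<Sum>l\<in>C - {i}. f l * H row l) = (\<Sum>l\<in>C - {i}. (c i * f l) * H row l)"
      by (simp add: sum_distrib_left mult.assoc)
    also have "\<dots> = (\<Sum>l\<in>C - {i}. - (c l * H row l))" using fi by simp
    also have "\<dots> = - (\<Sum>l\<in>C - {i}. c l * H row l)" by (simp add: sum_negf)
    finally show ?thesis .
  qed
  have split: "(\<Sum>l\<in>C. c l * H row l) = c i * H row i + (\<Sum>l\<in>C - {i}. c l * H row l)" for row
    using sum.remove[OF fC iC] .
  have colrel: "\<forall>row<k. H row i = (\<Sum>l\<in>C - {i}. f l * H row l)"
  proof (intro allI impI)
    fix row assume "row < k"
    then have "c i * H row i = - (\<Sum>l\<in>C - {i}. c l * H row l)" using c split[of row] by (simp add: eq_neg_iff_add_eq_0)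
    also have "\<dots> = c i * (\<Sum>l\<in>C - {i}. f l * H row l)" using mulsum[of row] by simp
    finally show "H row i = (\<Sum>l\<in>C - {i}. f l * H row l)" using ci by simp
  qed
  have neq: "H k i \<noteq> (\<Sum>l\<in>C - {i}. f l * H k l)"
  proof
    assume eq: "H k i = (\<Sum>l\<in>C - {i}. f l * H k l)"
    have "H k i \<in> veto_set H k i ({0..<m} - set (drop (Suc t) xs))"
      unfolding veto_set_def using iC Csub C(2) colrel eq by blast
    then show False using veto by blast
  qed
  define \<alpha> where "\<alpha> = (\<Sum>l\<in>C. c l * H k l)"
  have "\<alpha> = c i * H k i - c i * (\<Sum>l\<in>C - {i}. f l * H k l)"
    unfolding \<alpha>_def split[of k] mulsum[of k] by simp
  also have "\<dots> = c i * (H k i - (\<Sum>l\<in>C - {i}. f l * H k l))" by (simp add: algebra_simps)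
  finally have a0: "\<alpha> \<noteq> 0" using ci neq by simp
  have cj: "c j \<noteq> 0" using cnz jC by blast
  have fjB: "finite (insert j B)" using fB by simp
  have indS: "col_indep H (Suc k) (insert j B)"
    unfolding col_indep_def
  proof (intro conjI allI impI)
    show "finite (insert j B)" using fB by simp
    fix e assume he: "\<forall>row<Suc k. (\<Sum>l\<in>insert j B. e l * H row l) = 0"
    define lam where "lam = e j / c j"
    define d where "d = (\<lambda>l. e l - lam * (if l \<in> C then c l else 0))"
    have dsum: "(\<Sum>l\<in>insert j B. d l * H row l) = (\<Sum>l\<in>insert j B. e l * H row l) - lam * (\<Sum>l\<in>C. c l * H row l)" for row
    proof -
      have "(\<Sum>l\<in>insert j B. d l * H row l) = (\<Sum>l\<in>insert j B. e l * H row l - lam * ((if l \<in> C then c l else 0) * H row l))"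
        unfolding d_def by (rule sum.cong) (auto simp: algebra_simps)
      also have "\<dots> = (\<Sum>l\<in>insert j B. e l * H row l) - lam * (\<Sum>l\<in>insert j B. (if l \<in> C then c l else 0) * H row l)"
        by (simp add: sum_subtractf sum_distrib_left)
      also have "(\<Sum>l\<in>insert j B. (if l \<in> C then c l else 0) * H row l) = (\<Sum>l\<in>C. c l * H row l)"
        by (rule sum_restrict_sub[OF fjB C(1)])
      finally show ?thesis .
    qed
    have dj: "d j = 0" unfolding d_def lam_def using jC cj by simp
    have "\<forall>row<k. (\<Sum>l\<in>B. d l * H row l) = 0"
    proof (intro allI impI)
      fix row assume rk: "row < k"
      have "(\<Sum>l\<in>insert j B. d l * H row l) = 0" using dsum[of row] he c rk by simp
      then show "(\<Sum>l\<in>B. d l * H row l) = 0" using sum.insert[OF fB jB, of "\<lambda>l. d l * H row l"] dj by simp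
    qed
    then have dB: "\<forall>l\<in>B. d l = 0" using B(2) unfolding col_indep_def by blast
    then have dall: "\<forall>l\<in>insert j B. d l = 0" using dj by blast
    have "(\<Sum>l\<in>insert j B. d l * H k l) = 0" using dall by (intro sum.neutral) simp
    then have "lam * \<alpha> = 0" using dsum[of k] he unfolding \<alpha>_def by simp
    then have l0: "lam = 0" using a0 by simp
    then have ej: "e j = 0" unfolding lam_def using cj by simp
    show "\<forall>l\<in>insert j B. e l = 0"
    proof
      fix l assume "l \<in> insert j B"
      then have "d l = 0" using dall by blast
      then show "e l = 0" unfolding d_def using l0 by simp
    qed
  qed
  have "card (insert j B) \<le> mrank H (Suc k) L" using mrank_ge[OF fL jBL indS] .
  then show ?thesis using cjB cB by simp
qed


theorem proposition5:
  fixes G :: "nat \<Rightarrow> nat \<Rightarrow> bool" and H :: "nat \<Rightarrow> nat \<Rightarrow> 'a::{field,finite}"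
    and r m :: nat
  assumes "r \<le> m"
    and "card (UNIV :: 'a set) \<ge> m choose (min (m div 2) r)"
    and "mcd_output G r m H"
  shows "\<forall>k L. 1 \<le> k \<and> k \<le> r \<and> L \<subseteq> {0..<m} \<longrightarrow>
           mrank H k L = Max {mrank H' k L | H' :: nat \<Rightarrow> nat \<Rightarrow> 'a. fits r m G H'}"
proof -
  have mcd: "mcd_output G r m H" by fact
  have Hfits: "fits r m G H" using mcd unfolding mcd_output_def by simp
  have key: "\<forall>L (H' :: nat \<Rightarrow> nat \<Rightarrow> 'a). L \<subseteq> {0..<m} \<longrightarrow> fits r m G H' \<longrightarrow> mrank H' k L \<le> mrank H k L"
    if "k \<le> r" for k
    using that
  proof (induction k)
    case 0
    show ?case
    proof (intro allI impI)
      fix L and H' :: "nat \<Rightarrow> nat \<Rightarrow> 'a" assume "L \<subseteq> {0..<m}"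
      then have "finite L" using finite_subset[of L "{0..<m}"] by simp
      then show "mrank H' 0 L \<le> mrank H 0 L" using mrank0[of L H'] by simp
    qed
  next
    case (Suc k)
    have kr: "k < r" using Suc.prems by simp
    have IH: "\<forall>L (H' :: nat \<Rightarrow> nat \<Rightarrow> 'a). L \<subseteq> {0..<m} \<longrightarrow> fits r m G H' \<longrightarrow> mrank H' k L \<le> mrank H k L"
      using Suc.IH kr by simp
    show ?case
    proof (intro allI impI)
      fix L and H' :: "nat \<Rightarrow> nat \<Rightarrow> 'a" assume Lm: "L \<subseteq> {0..<m}" and fH': "fits r m G H'"
      have fL: "finite L" using finite_subset[OF Lm] by simp
      obtain S where S: "S \<subseteq> L" "col_indep H' (Suc k) S" "card S = mrank H' (Suc k) L"
        by (rule mrank_ex[OF fL])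
      have fS: "finite S" using finite_subset[OF S(1) fL] .
      have monoH: "mrank H k L \<le> mrank H (Suc k) L" by (rule mrank_mono_k[OF fL]) simp
      show "mrank H' (Suc k) L \<le> mrank H (Suc k) L"
      proof (cases "col_indep H' k S")
        case True
        have "card S \<le> mrank H' k L" using mrank_ge[OF fL S(1) True] .
        also have "\<dots> \<le> mrank H k L" using IH[rule_format, OF Lm fH'] .
        finally show ?thesis using S(3) monoH by simp
      next
        case False
        have Sm: "S \<subseteq> {0..<m}" using S(1) Lm by blast
        obtain j where j: "j \<in> S" "G k j" "col_indep H' k (S - {j})"
          using Hp_step[OF fH' kr Sm S(2) False] by blast
        have cSj: "card (S - {j}) = card S - 1" using j(1) fS by simp
        have fLj: "finite (L - {j})" using fL by simp
        have SjL: "S - {j} \<subseteq> L - {j}" using S(1) by blast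
        have LjM: "L - {j} \<subseteq> {0..<m}" using Lm by blast
        have "card (S - {j}) \<le> mrank H' k (L - {j})" using mrank_ge[OF fLj SjL j(3)] .
        also have "\<dots> \<le> mrank H k (L - {j})" using IH[rule_format, OF LjM fH'] .
        finally have a1: "card S - 1 \<le> mrank H k (L - {j})" using cSj by simp
        have a2: "mrank H k (L - {j}) \<le> mrank H k L" by (rule mrank_mono_L[OF fL]) blast
        show ?thesis
        proof (cases "card S \<le> mrank H k L")
          case True
          then show ?thesis using S(3) monoH by simp
        next
          case False
          then have ge: "mrank H k L \<le> mrank H k (L - {j})" using a1 by simp
          have jL: "j \<in> L" using j(1) S(1) by blast
          have jm: "j < m" using jL Lm by auto
          show ?thesis
          proof (cases "k = 0")
            case True
            have "1 \<le> mrank H 1 L" using H_step0[OF mcd jm _ jL fL] j(2) True by simp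
            moreover have "mrank H k L = 0" using True mrank0[OF fL] by simp
            ultimately show ?thesis using S(3) a1 a2 True by simp
          next
            case False
            then have "1 \<le> k" by simp
            then have "mrank H k L + 1 \<le> mrank H (Suc k) L"
              using H_step[OF mcd _ kr Lm jL j(2) ge] by simp
            then show ?thesis using S(3) a1 a2 by simp
          qed
        qed
      qed
    qed
  qed
  show ?thesis
  proof (intro allI impI)
    fix k L assume kL: "1 \<le> k \<and> k \<le> r \<and> L \<subseteq> {0..<m}"
    have fL: "finite L" using finite_subset[of L "{0..<m}"] kL by simp
    let ?A = "{mrank H' k L | H' :: nat \<Rightarrow> nat \<Rightarrow> 'a. fits r m G H'}"
    have "?A \<subseteq> {..card L}" using mrank_le_card[OF fL] by auto
    moreover have "finite {..card L}" by simp
    ultimately have fA: "finite ?A" by (rule finite_subset)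
    have inA: "mrank H k L \<in> ?A" using Hfits by blast
    have key2: "\<forall>L (H' :: nat \<Rightarrow> nat \<Rightarrow> 'a). L \<subseteq> {0..<m} \<longrightarrow> fits r m G H' \<longrightarrow> mrank H' k L \<le> mrank H k L"
      using key kL by simp
    have ub: "y \<le> mrank H k L" if "y \<in> ?A" for y
    proof -
      from that obtain H' :: "nat \<Rightarrow> nat \<Rightarrow> 'a" where "y = mrank H' k L" "fits r m G H'" by blast
      then show ?thesis using key2 kL by simp
    qed
    show "mrank H k L = Max ?A" using Max_eqI[OF fA ub inA] by simp
  qed
qed


end
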